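(* Let $G$ be a finite group of nilpotency class at most $2$ and $w\in F_2$. Let $e=\exp(G)$, $e'=\exp([G,G])$ and $f=\exp(G/Z(G))$, and for $r\in\mathbb N$ let $\mathcal P_r$ be the set of prime divisors of $r$. Then there exist $m,n\in\mathbb N$ with $\mathcal P_m\subseteq\mathcal P_e$, $\mathcal P_n\subseteq\mathcal P_f$ and $n\le e'$ such that $w(G)=v(G)$ where $v=x^m[x,y^n]$.
   Context: $[a,b]=aba^{-1}b^{-1}$; $x,y$ are the free generators of $F_2$; for $w\in F_2$, $w(G)=\{w(a,b):a,b\in G\}$. Nilpotency class at most 2 means $[G,G]\subseteq Z(G)$. *)

theory Defs
  imports "HOL-Algebra.Algebra"
begin

definition comm :: "('a, 'b) monoid_scheme \<Rightarrow> 'a \<Rightarrow> 'a \<Rightarrow> 'a" where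
  "comm G a b = a \<otimes>\<^bsub>G\<^esub> b \<otimes>\<^bsub>G\<^esub> inv\<^bsub>G\<^esub> a \<otimes>\<^bsub>G\<^esub> inv\<^bsub>G\<^esub> b"

definition center :: "('a, 'b) monoid_scheme \<Rightarrow> 'a set" where
  "center G = {z \<in> carrier G. \<forall>g \<in> carrier G. z \<otimes>\<^bsub>G\<^esub> g = g \<otimes>\<^bsub>G\<^esub> z}"

definition nilpotent_class_le_2 :: "('a, 'b) monoid_scheme \<Rightarrow> bool" where
  "nilpotent_class_le_2 G \<longleftrightarrow> derived G (carrier G) \<subseteq> center G"

definition grp_exp :: "('a, 'b) monoid_scheme \<Rightarrow> nat" where
  "grp_exp G = (LEAST n. 0 < n \<and> (\<forall>g \<in> carrier G. g [^]\<^bsub>G\<^esub> n = \<one>\<^bsub>G\<^esub>))"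

text \<open>Elements of the free group F_2 on x, y, represented by words: lists of
  letters (gen, inverted), gen = False for x and True for y.  The word map
  depends only on the group element the word represents.\<close>
type_synonym word2 = "(bool \<times> bool) list"

fun letter_eval :: "('a, 'b) monoid_scheme \<Rightarrow> 'a \<Rightarrow> 'a \<Rightarrow> bool \<times> bool \<Rightarrow> 'a" where
  "letter_eval G a b (g, i) = (let c = (if g then b else a) in if i then inv\<^bsub>G\<^esub> c else c)"

fun word_eval :: "('a, 'b) monoid_scheme \<Rightarrow> word2 \<Rightarrow> 'a \<Rightarrow> 'a \<Rightarrow> 'a" where
  "word_eval G [] a b = \<one>\<^bsub>G\<^esub>"
| "word_eval G (l # ls) a b = letter_eval G a b l \<otimes>\<^bsub>G\<^esub> word_eval G ls a b"

definition word_image :: "('a, 'b) monoid_scheme \<Rightarrow> word2 \<Rightarrow> 'a set" where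
  "word_image G w = {word_eval G w a b | a b. a \<in> carrier G \<and> b \<in> carrier G}"

text \<open>The word x^m [x, y^n] = x^m x y^n x^-1 y^-n.\<close>
definition v_word :: "nat \<Rightarrow> nat \<Rightarrow> word2" where
  "v_word m n = replicate m (False, False) @ [(False, False)] @ replicate n (True, False)
                 @ [(False, True)] @ replicate n (True, True)"

definition prime_divs :: "nat \<Rightarrow> nat set" where
  "prime_divs r = {p. Factorial_Ring.prime p \<and> p dvd r}"

end

theory Submission
  imports Defs
begin

lemma grp_exp_props:
  assumes "group H" "finite (carrier H)"
  shows "0 < grp_exp H \<and> (\<forall>g \<in> carrier H. g [^]\<^bsub>H\<^esub> grp_exp H = \<one>\<^bsub>H\<^esub>)"
proof -
  interpret H: group H by fact
  have ex: "0 < order H \<and> (\<forall>g \<in> carrier H. g [^]\<^bsub>H\<^esub> order H = \<one>\<^bsub>H\<^esub>)"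
    using assms(2) H.pow_order_eq_1 by (auto simp: H.order_gt_0_iff_finite)
  show ?thesis unfolding grp_exp_def by (rule LeastI[of _ "order H"], rule ex)
qed

locale cl2 = group G for G (structure) +
  assumes nil: "derived G (carrier G) \<subseteq> center G"
begin

lemma cancel1[simp]: "x \<in> carrier G \<Longrightarrow> z \<in> carrier G \<Longrightarrow> x \<otimes> (inv x \<otimes> z) = z"
  by (simp add: m_assoc[symmetric])
lemma cancel2[simp]: "x \<in> carrier G \<Longrightarrow> z \<in> carrier G \<Longrightarrow> inv x \<otimes> (x \<otimes> z) = z"
  by (simp add: m_assoc[symmetric])

lemma conj_central: assumes "c \<in> carrier G" "x \<in> carrier G" "c \<otimes> x = x \<otimes> c"
  shows "x \<otimes> c \<otimes> inv x = c"
proof -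
  have "x \<otimes> c \<otimes> inv x = c \<otimes> x \<otimes> inv x" by (simp only: assms(3))
  also have "\<dots> = c" using assms(1,2) by (simp add: m_assoc)
  finally show ?thesis .
qed

lemma comm_closed[simp]: "a \<in> carrier G \<Longrightarrow> b \<in> carrier G \<Longrightarrow> comm G a b \<in> carrier G"
  by (simp add: comm_def)

lemma comm_derived: "a \<in> carrier G \<Longrightarrow> b \<in> carrier G \<Longrightarrow> comm G a b \<in> derived G (carrier G)"
  unfolding derived_def comm_def by (rule generate.incl) blast

lemma comm_central: "a \<in> carrier G \<Longrightarrow> b \<in> carrier G \<Longrightarrow> g \<in> carrier G \<Longrightarrow>
   comm G a b \<otimes> g = g \<otimes> comm G a b"
  using comm_derived nil unfolding center_def by blast

lemma comm_swap: "a \<in> carrier G \<Longrightarrow> b \<in> carrier G \<Longrightarrow> b \<otimes> a = comm G b a \<otimes> a \<otimes> b"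
  by (simp add: comm_def m_assoc)

lemma comm_hom_r: "a \<in> carrier G \<Longrightarrow> comm G a \<in> hom G G"
proof (rule homI)
  fix x y assume a: "a \<in> carrier G" and x: "x \<in> carrier G" and y: "y \<in> carrier G"
  show "comm G a x \<in> carrier G" using a x by simp
  have "comm G a (x \<otimes> y) = comm G a x \<otimes> (x \<otimes> comm G a y \<otimes> inv x)"
    using a x y by (simp add: comm_def m_assoc inv_mult_group)
  also have "x \<otimes> comm G a y \<otimes> inv x = comm G a y"
    using a x y comm_central[of a y x] by (simp add: conj_central)
  finally show "comm G a (x \<otimes> y) = comm G a x \<otimes> comm G a y" .
qed

lemma comm_hom_l: "b \<in> carrier G \<Longrightarrow> (\<lambda>x. comm G x b) \<in> hom G G"
proof (rule homI)
  fix x y assume b: "b \<in> carrier G" and x: "x \<in> carrier G" and y: "y \<in> carrier G"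
  show "comm G x b \<in> carrier G" using b x by simp
  have "comm G (x \<otimes> y) b = x \<otimes> comm G y b \<otimes> inv x \<otimes> comm G x b"
    using b x y by (simp add: comm_def m_assoc inv_mult_group)
  also have "x \<otimes> comm G y b \<otimes> inv x = comm G y b"
    using b x y comm_central[of y b x] by (simp add: conj_central)
  finally show "comm G (x \<otimes> y) b = comm G x b \<otimes> comm G y b"
    using b x y comm_central[of y b x] comm_central[of x b] by simp
qed

lemma comm_pow_r: "a \<in> carrier G \<Longrightarrow> b \<in> carrier G \<Longrightarrow> comm G a (b [^] (k::int)) = comm G a b [^] k"
  using hom_int_pow[OF comm_hom_r] group_axioms by blast

lemma comm_pow_l: "a \<in> carrier G \<Longrightarrow> b \<in> carrier G \<Longrightarrow> comm G (a [^] (k::int)) b = comm G a b [^] k"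
  using hom_int_pow[OF comm_hom_l, of b a] group_axioms by blast

lemma comm_inv: "a \<in> carrier G \<Longrightarrow> b \<in> carrier G \<Longrightarrow> comm G b a = inv (comm G a b)"
  by (simp add: comm_def m_assoc inv_mult_group)

end

fun ex :: "word2 \<Rightarrow> int" where
  "ex [] = 0"
| "ex ((g,i)#ls) = (if g then 0 else if i then -1 else 1) + ex ls"

fun ey :: "word2 \<Rightarrow> int" where
  "ey [] = 0"
| "ey ((g,i)#ls) = (if g then (if i then -1 else 1) else 0) + ey ls"

fun gam :: "word2 \<Rightarrow> int" where
  "gam [] = 0"
| "gam ((g,i)#ls) = (if g then (if i then gam ls + ex ls else gam ls - ex ls) else gam ls)"

definition inv_word :: "word2 \<Rightarrow> word2" where
  "inv_word s = rev (map (\<lambda>(g,i). (g, \<not> i)) s)"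

fun wsubst :: "word2 \<Rightarrow> word2 \<Rightarrow> word2 \<Rightarrow> word2" where
  "wsubst u v [] = []"
| "wsubst u v ((g,i)#ls) = (if i then inv_word (if g then v else u) else (if g then v else u)) @ wsubst u v ls"

lemma inv_word_simps[simp]: "inv_word [] = []" "inv_word ((g,i)#s) = inv_word s @ [(g, \<not> i)]"
  by (auto simp: inv_word_def)

lemma ex_append[simp]: "ex (s @ t) = ex s + ex t" by (induction s rule: ex.induct) auto
lemma ey_append[simp]: "ey (s @ t) = ey s + ey t" by (induction s rule: ey.induct) auto
lemma ex_inv[simp]: "ex (inv_word s) = - ex s" by (induction s rule: ex.induct) auto
lemma ey_inv[simp]: "ey (inv_word s) = - ey s" by (induction s rule: ey.induct) auto
lemma ex_subst: "ex (wsubst u v w) = ex w * ex u + ey w * ex v"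
  by (induction w rule: ex.induct) (auto simp: algebra_simps)
lemma ey_subst: "ey (wsubst u v w) = ex w * ey u + ey w * ey v"
  by (induction w rule: ex.induct) (auto simp: algebra_simps)

context group begin

lemma letter_closed[simp]: "a \<in> carrier G \<Longrightarrow> b \<in> carrier G \<Longrightarrow> letter_eval G a b l \<in> carrier G"
  by (cases l) (auto simp: Let_def)

lemma word_closed[simp]: "a \<in> carrier G \<Longrightarrow> b \<in> carrier G \<Longrightarrow> word_eval G w a b \<in> carrier G"
  by (induction w) auto

lemma word_append: "a \<in> carrier G \<Longrightarrow> b \<in> carrier G \<Longrightarrow>
   word_eval G (s @ t) a b = word_eval G s a b \<otimes> word_eval G t a b"
  by (induction s) (auto simp: m_assoc)

lemma word_inv: "a \<in> carrier G \<Longrightarrow> b \<in> carrier G \<Longrightarrow>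
   word_eval G (inv_word s) a b = inv (word_eval G s a b)"
  by (induction s) (auto simp: word_append Let_def inv_mult_group)

lemma word_subst: "a \<in> carrier G \<Longrightarrow> b \<in> carrier G \<Longrightarrow>
   word_eval G (wsubst u v w) a b = word_eval G w (word_eval G u a b) (word_eval G v a b)"
  by (induction w rule: wsubst.induct) (auto simp: word_append word_inv Let_def)

lemma image_subst:
  assumes surj: "\<And>a b. a \<in> carrier G \<Longrightarrow> b \<in> carrier G \<Longrightarrow>
     \<exists>a' \<in> carrier G. \<exists>b' \<in> carrier G. word_eval G u a' b' = a \<and> word_eval G v a' b' = b"
  shows "word_image G (wsubst u v w) = word_image G w"
proof
  show "word_image G (wsubst u v w) \<subseteq> word_image G w"
    unfolding word_image_def apply (auto simp: word_subst) using word_closed by blast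
  show "word_image G w \<subseteq> word_image G (wsubst u v w)"
  proof
    fix z assume "z \<in> word_image G w"
    then obtain a b where ab: "a \<in> carrier G" "b \<in> carrier G" "z = word_eval G w a b"
      unfolding word_image_def by auto
    from surj[OF ab(1,2)] obtain a' b' where c: "a' \<in> carrier G" "b' \<in> carrier G"
      "word_eval G u a' b' = a" "word_eval G v a' b' = b" by blast
    then have "z = word_eval G (wsubst u v w) a' b'" using ab by (simp add: word_subst)
    then show "z \<in> word_image G (wsubst u v w)"
      unfolding word_image_def using c(1,2) by blast
  qed
qed

end

context cl2 begin

lemma comm_pows: "a \<in> carrier G \<Longrightarrow> b \<in> carrier G \<Longrightarrow>
  comm G (a [^] (i::int)) (b [^] (j::int)) = comm G a b [^] (i * j)"
  by (simp add: comm_pow_l comm_pow_r int_pow_pow)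

lemma comm_pow_central: "a \<in> carrier G \<Longrightarrow> b \<in> carrier G \<Longrightarrow> g \<in> carrier G \<Longrightarrow>
   comm G a b [^] (k::int) \<otimes> g = g \<otimes> comm G a b [^] k"
  using comm_central[of a "b [^] k" g] by (simp add: comm_pow_r)

lemma nf_step:
  assumes a: "a \<in> carrier G" and b: "b \<in> carrier G"
  shows "b [^] (s::int) \<otimes> (a [^] (\<alpha>::int) \<otimes> b [^] (\<beta>::int) \<otimes> comm G a b [^] (\<gamma>::int))
     = a [^] \<alpha> \<otimes> b [^] (s + \<beta>) \<otimes> comm G a b [^] (\<gamma> - s * \<alpha>)"
proof -
  define A where "A = a [^] \<alpha>"
  define B where "B = b [^] \<beta>"
  define C where "C = comm G a b [^] \<gamma>"
  define D where "D = comm G a b [^] (- (s * \<alpha>))"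
  define S where "S = b [^] s"
  have cl: "A \<in> carrier G" "B \<in> carrier G" "C \<in> carrier G" "D \<in> carrier G" "S \<in> carrier G"
    using a b by (auto simp: A_def B_def C_def D_def S_def)
  have sw: "S \<otimes> A = D \<otimes> A \<otimes> S"
  proof -
    have "S \<otimes> A = comm G S A \<otimes> A \<otimes> S" by (rule comm_swap[OF cl(1) cl(5)])
    also have "comm G S A = D"
    proof -
      have "comm G S A = inv (comm G A S)" by (rule comm_inv[OF cl(1) cl(5)])
      also have "comm G A S = comm G a b [^] (\<alpha> * s)" unfolding A_def S_def using a b by (rule comm_pows)
      also have "inv (comm G a b [^] (\<alpha> * s)) = D" unfolding D_def using a b
        by (simp add: int_pow_neg[symmetric] mult.commute)
      finally show ?thesis .
    qed
    finally show ?thesis .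
  qed
  have "S \<otimes> (A \<otimes> B \<otimes> C) = (S \<otimes> A) \<otimes> B \<otimes> C" using cl by (simp add: m_assoc)
  also have "\<dots> = D \<otimes> (A \<otimes> (S \<otimes> B) \<otimes> C)" using cl by (simp add: sw m_assoc)
  also have "\<dots> = (A \<otimes> (S \<otimes> B) \<otimes> C) \<otimes> D"
    unfolding D_def using a b cl by (intro comm_pow_central) auto
  also have "\<dots> = A \<otimes> (S \<otimes> B) \<otimes> (C \<otimes> D)" using cl by (simp add: m_assoc)
  also have "S \<otimes> B = b [^] (s + \<beta>)" using b by (simp add: S_def B_def int_pow_mult)
  also have "C \<otimes> D = comm G a b [^] (\<gamma> - s * \<alpha>)" using a b
    by (simp add: C_def D_def int_pow_mult[symmetric])
  finally show ?thesis by (simp add: A_def B_def C_def S_def)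
qed

lemma normal_form:
  assumes a: "a \<in> carrier G" and b: "b \<in> carrier G"
  shows "word_eval G w a b = a [^] ex w \<otimes> b [^] ey w \<otimes> comm G a b [^] gam w"
proof (induction w)
  case Nil
  then show ?case using a b by simp
next
  case (Cons l w)
  obtain g i where l: "l = (g, i)" by (cases l)
  show ?case
  proof (cases g)
    case True
    define s where "s = (if i then -1 else 1 :: int)"
    have le: "letter_eval G a b l = b [^] s"
      using b True l by (auto simp: int_pow_neg s_def)
    have "word_eval G (l # w) a b = b [^] s \<otimes> (a [^] ex w \<otimes> b [^] ey w \<otimes> comm G a b [^] gam w)"
      using Cons by (simp only: word_eval.simps le)
    also have "\<dots> = a [^] ex w \<otimes> b [^] (s + ey w) \<otimes> comm G a b [^] (gam w - s * ex w)"
      by (rule nf_step[OF a b])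
    also have "s + ey w = ey (l # w)" using True l by (simp add: s_def)
    also have "gam w - s * ex w = gam (l # w)" using True l by (simp add: s_def)
    also have "ex w = ex (l # w)" using True l by simp
    finally show ?thesis .
  next
    case False
    define s where "s = (if i then -1 else 1 :: int)"
    have le: "letter_eval G a b l = a [^] s"
      using a False l by (auto simp: int_pow_neg s_def)
    have "word_eval G (l # w) a b = a [^] s \<otimes> (a [^] ex w \<otimes> b [^] ey w \<otimes> comm G a b [^] gam w)"
      using Cons by (simp only: word_eval.simps le)
    also have "\<dots> = a [^] (s + ex w) \<otimes> b [^] ey w \<otimes> comm G a b [^] gam w"
      using a b by (simp add: int_pow_mult m_assoc)
    also have "s + ex w = ex (l # w)" using False l by (simp add: s_def)
    also have "ey w = ey (l # w)" using False l by simp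
    also have "gam w = gam (l # w)" using False l by simp
    finally show ?thesis .
  qed
qed

end

context group begin

lemma img_swap: "word_image G (wsubst [(True,False)] [(False,False)] w) = word_image G w"
  by (rule image_subst) (rule_tac x=b in bexI, rule_tac x=a in bexI, auto)

lemma img_neg: "word_image G (wsubst [(False,True)] [(True,False)] w) = word_image G w"
  by (rule image_subst) (rule_tac x="inv a" in bexI, rule_tac x=b in bexI, auto)

lemma img_plus: "word_image G (wsubst [(False,False),(True,False)] [(True,False)] w) = word_image G w"
  by (rule image_subst) (rule_tac x="a \<otimes> inv b" in bexI, rule_tac x=b in bexI, auto simp: m_assoc)

lemma img_minus: "word_image G (wsubst [(False,False),(True,True)] [(True,False)] w) = word_image G w"
  by (rule image_subst) (rule_tac x="a \<otimes> b" in bexI, rule_tac x=b in bexI, auto simp: m_assoc)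

lemma euclid_aux: "ey w = 0 \<Longrightarrow> \<exists>w'. word_image G w' = word_image G w \<and> ey w' = 0 \<and> ex w' \<ge> 0"
proof (cases "ex w \<ge> 0")
  case True
  assume "ey w = 0" with True show ?thesis by blast
next
  case False
  assume "ey w = 0"
  with False show ?thesis
    by (intro exI[of _ "wsubst [(False,True)] [(True,False)] w"]) (simp add: img_neg ex_subst ey_subst)
qed

lemma euclid: "\<exists>w'. word_image G w' = word_image G w \<and> ey w' = 0 \<and> ex w' \<ge> 0"
proof (induction "nat (\<bar>ex w\<bar> + \<bar>ey w\<bar>)" arbitrary: w rule: less_induct)
  case less
  define pl where "pl w = wsubst [(False,False),(True,False)] [(True,False)] w" for w
  define mi where "mi w = wsubst [(False,False),(True,True)] [(True,False)] w" for w
  define sw where "sw w = wsubst [(True,False)] [(False,False)] w" for w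
  have pl: "word_image G (pl w) = word_image G w" "ex (pl w) = ex w" "ey (pl w) = ey w + ex w" for w
    by (auto simp: pl_def img_plus ex_subst ey_subst)
  have mi: "word_image G (mi w) = word_image G w" "ex (mi w) = ex w" "ey (mi w) = ey w - ex w" for w
    by (auto simp: mi_def img_minus ex_subst ey_subst)
  have sw: "word_image G (sw w) = word_image G w" "ex (sw w) = ey w" "ey (sw w) = ex w" for w
    by (auto simp: sw_def img_swap ex_subst ey_subst)
  have red: "\<exists>w'. word_image G w' = word_image G u \<and> ey w' = 0 \<and> ex w' \<ge> 0"
    if u: "\<bar>ex u\<bar> \<le> \<bar>ey u\<bar>" "ex u \<noteq> 0" "\<bar>ex u\<bar> + \<bar>ey u\<bar> \<le> \<bar>ex w\<bar> + \<bar>ey w\<bar>" for u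
  proof (cases "(ex u > 0) = (ey u > 0)")
    case True
    have "nat (\<bar>ex (mi u)\<bar> + \<bar>ey (mi u)\<bar>) < nat (\<bar>ex w\<bar> + \<bar>ey w\<bar>)"
      using u True by (simp add: mi) linarith
    from less[OF this] show ?thesis using mi(1) by metis
  next
    case False
    have "nat (\<bar>ex (pl u)\<bar> + \<bar>ey (pl u)\<bar>) < nat (\<bar>ex w\<bar> + \<bar>ey w\<bar>)"
      using u False by (simp add: pl) linarith
    from less[OF this] show ?thesis using pl(1) by metis
  qed
  show ?case
  proof (cases "ey w = 0")
    case True then show ?thesis by (rule euclid_aux)
  next
    case ey: False
    show ?thesis
    proof (cases "ex w = 0")
      case True
      then have "ey (sw w) = 0" by (simp add: sw)
      from euclid_aux[OF this] show ?thesis using sw(1) by metis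
    next
      case ex: False
      show ?thesis
      proof (cases "\<bar>ex w\<bar> \<le> \<bar>ey w\<bar>")
        case True
        from red[of w] True ex show ?thesis by simp
      next
        case False
        from red[of "sw w"] False ey show ?thesis by (simp add: sw)
      qed
    qed
  qed
qed

end

lemma prime_divs_1[simp]: "prime_divs 1 = {}"
  by (auto simp: prime_divs_def)

lemma prime_divs_dvd: "a dvd b \<Longrightarrow> prime_divs a \<subseteq> prime_divs b"
  by (auto simp: prime_divs_def intro: dvd_trans)

lemma factor_split:
  fixes x M :: nat
  assumes "0 < x"
  shows "\<exists>x1 x2. x = x1 * x2 \<and> prime_divs x1 \<subseteq> prime_divs M \<and> coprime x2 M"
  using assms
proof (induction x rule: less_induct)
  case (less x)
  show ?case
  proof (cases "coprime x M")
    case True show ?thesis by (rule exI[of _ "1::nat"], rule exI[of _ x]) (auto simp: True prime_divs_def)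
  next
    case False
    then have "gcd x M \<noteq> 1" by (simp add: coprime_iff_gcd_eq_1)
    then obtain p where p: "Factorial_Ring.prime p" "p dvd gcd x M" using prime_factor_nat by blast
    then obtain x' where x': "x = p * x'" by auto
    have p1: "1 < p" using p(1) prime_gt_1_nat by blast
    have "0 < x'" using x' less.prems by auto
    moreover have "x' < x" using x' p1 \<open>0 < x'\<close> by simp
    ultimately have "x' < x" "0 < x'" by auto
    from less.IH[OF this] obtain y1 y2 where y: "x' = y1 * y2" "prime_divs y1 \<subseteq> prime_divs M" "coprime y2 M"
      by blast
    have "prime_divs (p * y1) \<subseteq> prime_divs M"
    proof
      fix q assume "q \<in> prime_divs (p * y1)"
      then have q: "Factorial_Ring.prime q" "q dvd p * y1" by (auto simp: prime_divs_def)
      then have "q dvd p \<or> q dvd y1" by (simp add: prime_dvd_mult_iff)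
      then show "q \<in> prime_divs M"
      proof
        assume "q dvd p" then have "q = p" using q(1) p(1) primes_dvd_imp_eq by blast
        then show ?thesis using p q(1) by (auto simp: prime_divs_def)
      next
        assume "q dvd y1" then show ?thesis using q(1) y(2) by (auto simp: prime_divs_def)
      qed
    qed
    with y x' show ?thesis by (intro exI[of _ "p * y1"] exI[of _ y2]) (auto simp: mult.assoc)
  qed
qed

lemma inverse_mod:
  fixes a e :: nat
  assumes "coprime a e"
  shows "\<exists>s::int. int e dvd int a * s - 1"
proof -
  obtain u v where "u * int a + v * int e = gcd (int a) (int e)" using bezout_int by blast
  then have "u * int a + v * int e = 1" using assms by simp
  then have "int a * u - 1 = int e * (- v)" by (simp add: algebra_simps)
  then show ?thesis by (intro exI[of _ u]) (metis dvd_triv_left)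
qed

context group begin

lemma pow_mod:
  assumes "x \<in> carrier G" "x [^] (N::nat) = \<one>" "int N dvd (i - j)"
  shows "x [^] (i::int) = x [^] j"
proof -
  have "ord x dvd N" using assms pow_eq_id by blast
  then have "int (ord x) dvd (j - i)" using assms(3)
    by (metis dvd_diff_commute dvd_trans int_dvd_int_iff)
  then show ?thesis using int_pow_eq assms(1) by blast
qed

end

context cl2 begin

lemma center_subgroup: "subgroup (center G) G"
proof
  show "center G \<subseteq> carrier G" by (auto simp: center_def)
  show "\<one> \<in> center G" by (auto simp: center_def)
  fix x y assume x: "x \<in> center G" and y: "y \<in> center G"
  have xc: "x \<in> carrier G" and xg: "\<And>g. g \<in> carrier G \<Longrightarrow> x \<otimes> g = g \<otimes> x"
    using x by (auto simp: center_def)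
  have yc: "y \<in> carrier G" and yg: "\<And>g. g \<in> carrier G \<Longrightarrow> y \<otimes> g = g \<otimes> y"
    using y by (auto simp: center_def)
  have "x \<otimes> y \<otimes> g = g \<otimes> (x \<otimes> y)" if g: "g \<in> carrier G" for g
  proof -
    have "x \<otimes> y \<otimes> g = x \<otimes> (y \<otimes> g)" using xc yc g by (simp add: m_assoc)
    also have "\<dots> = x \<otimes> (g \<otimes> y)" using yg[OF g] by simp
    also have "\<dots> = (x \<otimes> g) \<otimes> y" using xc yc g by (simp only: m_assoc)
    also have "\<dots> = (g \<otimes> x) \<otimes> y" using xg[OF g] by simp
    also have "\<dots> = g \<otimes> (x \<otimes> y)" using xc yc g by (simp add: m_assoc)
    finally show ?thesis .
  qed
  then show "x \<otimes> y \<in> center G" using xc yc by (simp add: center_def)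
  have "inv x \<otimes> g = g \<otimes> inv x" if g: "g \<in> carrier G" for g
  proof -
    have "inv x \<otimes> g = inv x \<otimes> g \<otimes> (x \<otimes> inv x)" using xc g by simp
    also have "\<dots> = inv x \<otimes> (g \<otimes> x) \<otimes> inv x" using xc g by (simp only: m_assoc inv_closed m_closed)
    also have "g \<otimes> x = x \<otimes> g" using xg[OF g] by simp
    also have "inv x \<otimes> (x \<otimes> g) \<otimes> inv x = g \<otimes> inv x" using xc g by (simp add: m_assoc[symmetric])
    finally show ?thesis .
  qed
  then show "inv x \<in> center G" using xc by (simp add: center_def)
qed

lemma center_normal: "center G \<lhd> G"
proof (rule normalI[OF center_subgroup], intro ballI)
  fix x assume x: "x \<in> carrier G"
  have eq: "{h \<otimes> x} = {x \<otimes> h}" if "h \<in> center G" for h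
    using that x unfolding center_def by simp
  show "center G #> x = x <# center G"
    unfolding r_coset_def l_coset_def by (rule SUP_cong[OF refl eq])
qed

lemma coset_pow:
  assumes b: "b \<in> carrier G"
  shows "(center G #> b) [^]\<^bsub>G Mod center G\<^esub> (n::nat) = center G #> (b [^] n)"
proof (induction n)
  case 0
  have "center G \<subseteq> carrier G" by (auto simp: center_def)
  then have "center G #> (b [^] (0::nat)) = center G" by simp
  then show ?case by (simp only: nat_pow_0) (simp add: FactGroup_def)
next
  case (Suc n)
  have "(center G #> b) [^]\<^bsub>G Mod center G\<^esub> (Suc n)
     = (center G #> (b [^] n)) <#> (center G #> b)"
    by (simp only: Group.nat_pow_Suc Suc) (simp add: FactGroup_def)
  also have "\<dots> = center G #> (b [^] n \<otimes> b)"
    using b by (intro normal.rcos_sum[OF center_normal]) auto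
  also have "b [^] n \<otimes> b = b [^] Suc n" by simp
  finally show ?case .
qed

lemma comm_central_one: "a \<in> carrier G \<Longrightarrow> z \<in> center G \<Longrightarrow> comm G a z = \<one>"
  unfolding comm_def center_def by (auto simp: m_assoc)

lemma exps:
  assumes fin: "finite (carrier G)"
  shows "0 < grp_exp G" "\<And>a. a \<in> carrier G \<Longrightarrow> a [^] grp_exp G = \<one>"
    "0 < grp_exp (G Mod center G)"
    "\<And>a b. a \<in> carrier G \<Longrightarrow> b \<in> carrier G \<Longrightarrow> comm G a b [^] grp_exp (G Mod center G) = \<one>"
    "0 < grp_exp (G\<lparr>carrier := derived G (carrier G)\<rparr>)"
    "\<And>a b. a \<in> carrier G \<Longrightarrow> b \<in> carrier G \<Longrightarrow>
        comm G a b [^] grp_exp (G\<lparr>carrier := derived G (carrier G)\<rparr>) = \<one>"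
proof -
  show "0 < grp_exp G" "\<And>a. a \<in> carrier G \<Longrightarrow> a [^] grp_exp G = \<one>"
    using grp_exp_props[OF group_axioms fin] by auto
  interpret N: normal "center G" G by (rule center_normal)
  have gq: "group (G Mod center G)" by (rule N.factorgroup_is_group)
  have fq: "finite (carrier (G Mod center G))" using fin
    by (simp add: carrier_FactGroup)
  note q = grp_exp_props[OF gq fq]
  show "0 < grp_exp (G Mod center G)" using q by auto
  fix a b assume a: "a \<in> carrier G" and b: "b \<in> carrier G"
  let ?f = "grp_exp (G Mod center G)"
  have "center G #> b \<in> carrier (G Mod center G)" using b by (auto simp: carrier_FactGroup)
  then have "(center G #> b) [^]\<^bsub>G Mod center G\<^esub> ?f = center G" using q by (simp add: FactGroup_def)
  then have "center G #> (b [^] ?f) = center G" using coset_pow[OF b] by simp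
  then have bz: "b [^] ?f \<in> center G" using rcos_self[of "b [^] ?f" "center G"] center_subgroup b by simp
  have "comm G a b [^] ?f = comm G a b [^] (int ?f)" by (simp add: int_pow_int)
  also have "\<dots> = comm G a (b [^] int ?f)" using a b by (simp add: comm_pow_r)
  also have "\<dots> = \<one>" using bz a by (simp add: int_pow_int comm_central_one)
  finally show "comm G a b [^] ?f = \<one>" .
next
  let ?D = "derived G (carrier G)"
  have sg: "subgroup ?D G" by (rule derived_is_subgroup) simp
  have gd: "group (G\<lparr>carrier := ?D\<rparr>)" by (rule subgroup.subgroup_is_group[OF sg group_axioms])
  have fd: "finite (carrier (G\<lparr>carrier := ?D\<rparr>))" using fin subgroup.subset[OF sg]
    by (simp add: finite_subset)
  note q = grp_exp_props[OF gd fd]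
  show "0 < grp_exp (G\<lparr>carrier := ?D\<rparr>)" using q by auto
  fix a b assume a: "a \<in> carrier G" and b: "b \<in> carrier G"
  have "comm G a b \<in> ?D" using a b by (rule comm_derived)
  then have "comm G a b [^]\<^bsub>G\<lparr>carrier := ?D\<rparr>\<^esub> grp_exp (G\<lparr>carrier := ?D\<rparr>) = \<one>\<^bsub>G\<lparr>carrier := ?D\<rparr>\<^esub>"
    using q by simp
  then show "comm G a b [^] grp_exp (G\<lparr>carrier := ?D\<rparr>) = \<one>"
    by (simp only: nat_pow_consistent[symmetric]) simp
qed

end

context group begin

lemma eval_rep: "a \<in> carrier G \<Longrightarrow> b \<in> carrier G \<Longrightarrow>
  word_eval G (replicate k l) a b = letter_eval G a b l [^] k"
  by (induction k) (simp_all, metis nat_pow_Suc2 Group.nat_pow_Suc letter_closed)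

lemma set_eq2:
  assumes "\<And>a b. a \<in> carrier G \<Longrightarrow> b \<in> carrier G \<Longrightarrow> \<exists>a' \<in> carrier G. \<exists>b' \<in> carrier G. F a b = F' a' b'"
    and "\<And>a b. a \<in> carrier G \<Longrightarrow> b \<in> carrier G \<Longrightarrow> \<exists>a' \<in> carrier G. \<exists>b' \<in> carrier G. F' a b = F a' b'"
  shows "{F a b | a b. a \<in> carrier G \<and> b \<in> carrier G} = {F' a b | a b. a \<in> carrier G \<and> b \<in> carrier G}"
proof
  show "{F a b | a b. a \<in> carrier G \<and> b \<in> carrier G} \<subseteq> {F' a b | a b. a \<in> carrier G \<and> b \<in> carrier G}"
  proof
    fix z assume "z \<in> {F a b | a b. a \<in> carrier G \<and> b \<in> carrier G}"
    then obtain a b where ab: "a \<in> carrier G" "b \<in> carrier G" "z = F a b" by blast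
    from assms(1)[OF ab(1,2)] obtain a' b' where "a' \<in> carrier G" "b' \<in> carrier G" "F a b = F' a' b'" by blast
    then show "z \<in> {F' a b | a b. a \<in> carrier G \<and> b \<in> carrier G}" using ab(3) by blast
  qed
  show "{F' a b | a b. a \<in> carrier G \<and> b \<in> carrier G} \<subseteq> {F a b | a b. a \<in> carrier G \<and> b \<in> carrier G}"
  proof
    fix z assume "z \<in> {F' a b | a b. a \<in> carrier G \<and> b \<in> carrier G}"
    then obtain a b where ab: "a \<in> carrier G" "b \<in> carrier G" "z = F' a b" by blast
    from assms(2)[OF ab(1,2)] obtain a' b' where "a' \<in> carrier G" "b' \<in> carrier G" "F' a b = F a' b'" by blast
    then show "z \<in> {F a b | a b. a \<in> carrier G \<and> b \<in> carrier G}" using ab(3) by blast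
  qed
qed

lemma set_eq_pw:
  assumes "\<And>a b. a \<in> carrier G \<Longrightarrow> b \<in> carrier G \<Longrightarrow> F a b = F' a b"
  shows "{F a b | a b. a \<in> carrier G \<and> b \<in> carrier G} = {F' a b | a b. a \<in> carrier G \<and> b \<in> carrier G}"
  by (rule set_eq2) (metis assms)+

end

context cl2 begin

lemma eval_v: assumes a: "a \<in> carrier G" and b: "b \<in> carrier G"
  shows "word_eval G (v_word m n) a b = a [^] int m \<otimes> comm G a b [^] int n"
proof -
  have "word_eval G (v_word m n) a b = a [^] m \<otimes> (a \<otimes> (b [^] n \<otimes> (inv a \<otimes> (inv b [^] n))))"
    unfolding v_word_def using a b by (simp add: eval_rep word_append)
  also have "\<dots> = a [^] m \<otimes> comm G a (b [^] n)"
    using a b by (simp add: comm_def nat_pow_inv m_assoc)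
  also have "comm G a (b [^] n) = comm G a b [^] int n"
    using comm_pow_r[OF a b, of "int n"] by (simp add: int_pow_int)
  finally show ?thesis by (simp add: int_pow_int)
qed

end

lemma (in cl2) main:
  fixes w :: word2
  assumes fin: "finite (carrier G)"
  shows "\<exists>m n :: nat.
           prime_divs m \<subseteq> prime_divs (grp_exp G) \<and>
           prime_divs n \<subseteq> prime_divs (grp_exp (G Mod (center G))) \<and>
           n \<le> grp_exp (G\<lparr>carrier := derived G (carrier G)\<rparr>) \<and>
           word_image G w = word_image G (v_word m n)"
proof -
  note E = exps[OF fin]
  define e where "e = grp_exp G"
  define f where "f = grp_exp (G Mod center G)"
  define e' where "e' = grp_exp (G\<lparr>carrier := derived G (carrier G)\<rparr>)"
  have e0: "0 < e" and f0: "0 < f" and e'0: "0 < e'" using E by (auto simp: e_def f_def e'_def)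
  have ea: "\<And>a. a \<in> carrier G \<Longrightarrow> a [^] e = \<one>" using E e_def by auto
  have ce: "\<And>a b. a \<in> carrier G \<Longrightarrow> b \<in> carrier G \<Longrightarrow> comm G a b [^] e = \<one>" using ea by simp
  have cf: "\<And>a b. a \<in> carrier G \<Longrightarrow> b \<in> carrier G \<Longrightarrow> comm G a b [^] f = \<one>" using E f_def by auto
  have ce': "\<And>a b. a \<in> carrier G \<Longrightarrow> b \<in> carrier G \<Longrightarrow> comm G a b [^] e' = \<one>" using E e'_def by auto
  define S where "S i j = {a [^] (i::int) \<otimes> comm G a b [^] (j::int) | a b. a \<in> carrier G \<and> b \<in> carrier G}" for i j
  obtain w' where W: "word_image G w' = word_image G w" "ey w' = 0" "0 \<le> ex w'" using euclid by blast
  define d where "d = nat (ex w')"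
  define \<gamma> where "\<gamma> = gam w'"
  have pw: "\<And>a b. a \<in> carrier G \<Longrightarrow> b \<in> carrier G \<Longrightarrow> word_eval G w' a b = a [^] int d \<otimes> comm G a b [^] \<gamma>"
    using W by (simp add: normal_form d_def \<gamma>_def)
  have S1: "word_image G w = S (int d) \<gamma>"
  proof -
    have "word_image G w = word_image G w'" using W(1) by simp
    also have "\<dots> = S (int d) \<gamma>" unfolding word_image_def S_def by (rule set_eq_pw) (simp add: pw)
    finally show ?thesis .
  qed
  define d' where "d' = (if d = 0 then e else d)"
  have d'0: "0 < d'" using e0 by (simp add: d'_def)
  have S2: "S (int d) \<gamma> = S (int d') \<gamma>"
  proof -
    have "a [^] int d = a [^] int d'" if "a \<in> carrier G" for a
      using ea[OF that] by (simp add: d'_def int_pow_int)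
    then show ?thesis unfolding S_def by (intro set_eq_pw) simp
  qed
  obtain d1 d2 where dd: "d' = d1 * d2" "prime_divs d1 \<subseteq> prime_divs e" "coprime d2 e"
    using factor_split[OF d'0] by blast
  obtain s where s: "int e dvd int d2 * s - 1" using inverse_mod[OF dd(3)] by blast
  have S3: "S (int d') \<gamma> = S (int d1) (\<gamma> * s)"
    unfolding S_def
  proof (rule set_eq2)
    fix a b assume a: "a \<in> carrier G" and b: "b \<in> carrier G"
    let ?a' = "a [^] int d2"
    have "?a' [^] int d1 = a [^] int d'" using a by (simp add: int_pow_pow dd(1) mult.commute)
    moreover have "comm G ?a' b [^] (\<gamma> * s) = comm G a b [^] \<gamma>"
    proof -
      have "comm G ?a' b [^] (\<gamma> * s) = comm G a b [^] (int d2 * (\<gamma> * s))"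
        using a b by (simp add: comm_pow_l int_pow_pow)
      also have "\<dots> = comm G a b [^] \<gamma>"
      proof (rule pow_mod[OF _ ce[OF a b]])
        show "int e dvd int d2 * (\<gamma> * s) - \<gamma>"
          using dvd_mult[OF s, of \<gamma>] by (simp add: algebra_simps)
      qed (use a b in simp)
      finally show ?thesis .
    qed
    ultimately show "\<exists>a' \<in> carrier G. \<exists>b' \<in> carrier G.
       a [^] int d' \<otimes> comm G a b [^] \<gamma> = a' [^] int d1 \<otimes> comm G a' b' [^] (\<gamma> * s)"
      using a b by (intro bexI[of _ ?a'] bexI[of _ b]) auto
  next
    fix a b assume a: "a \<in> carrier G" and b: "b \<in> carrier G"
    let ?a' = "a [^] s"
    have "?a' [^] int d' = a [^] (s * int d')" using a by (simp add: int_pow_pow)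
    also have "\<dots> = a [^] int d1"
    proof (rule pow_mod[OF _ ea[OF a]])
      show "int e dvd s * int d' - int d1"
        using dvd_mult[OF s, of "int d1"] by (simp add: algebra_simps dd(1))
    qed (use a in simp)
    finally have 1: "?a' [^] int d' = a [^] int d1" .
    have 2: "comm G ?a' b [^] \<gamma> = comm G a b [^] (\<gamma> * s)"
      using a b by (simp add: comm_pow_l int_pow_pow mult.commute)
    show "\<exists>a' \<in> carrier G. \<exists>b' \<in> carrier G.
       a [^] int d1 \<otimes> comm G a b [^] (\<gamma> * s) = a' [^] int d' \<otimes> comm G a' b' [^] \<gamma>"
      using a b 1 2 by (intro bexI[of _ ?a'] bexI[of _ b]) auto
  qed
  define g where "g = gcd e' f"
  have g0: "0 < g" using e'0 by (simp add: g_def)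
  have cg: "\<And>a b. a \<in> carrier G \<Longrightarrow> b \<in> carrier G \<Longrightarrow> comm G a b [^] g = \<one>"
  proof -
    fix a b assume a: "a \<in> carrier G" and b: "b \<in> carrier G"
    have "ord (comm G a b) dvd e'" "ord (comm G a b) dvd f"
      using ce'[OF a b] cf[OF a b] a b pow_eq_id by auto
    then have "ord (comm G a b) dvd g" by (simp add: g_def)
    then show "comm G a b [^] g = \<one>" using a b pow_eq_id by simp
  qed
  define c0 where "c0 = (\<gamma> * s) mod int g"
  define c' where "c' = (if c0 = 0 then g else nat c0)"
  have c'0: "0 < c'" and c'g: "c' \<le> g" and c'mod: "int g dvd int c' - \<gamma> * s"
  proof -
    have "int g dvd c0 - \<gamma> * s"
      unfolding c0_def using dvd_minus_mod[of "int g" "\<gamma> * s"] by (simp only: dvd_diff_commute)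
    moreover have "0 \<le> c0" "c0 < int g" using g0 by (auto simp: c0_def)
    ultimately show "0 < c'" "c' \<le> g" "int g dvd int c' - \<gamma> * s"
      using g0 by (auto simp: c'_def dvd_diff_commute)
  qed
  have S4: "S (int d1) (\<gamma> * s) = S (int d1) (int c')"
  proof -
    have "comm G a b [^] (\<gamma> * s) = comm G a b [^] int c'" if "a \<in> carrier G" "b \<in> carrier G" for a b
      by (rule pow_mod[OF _ cg[OF that]]) (use that c'mod in \<open>auto simp: dvd_diff_commute\<close>)
    then show ?thesis unfolding S_def by (intro set_eq_pw) simp
  qed
  obtain n c2 where nn: "c' = n * c2" "prime_divs n \<subseteq> prime_divs g" "coprime c2 g"
    using factor_split[OF c'0] by blast
  obtain t where t: "int g dvd int c2 * t - 1" using inverse_mod[OF nn(3)] by blast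
  have S5: "S (int d1) (int c') = S (int d1) (int n)"
    unfolding S_def
  proof (rule set_eq2)
    fix a b assume a: "a \<in> carrier G" and b: "b \<in> carrier G"
    have "comm G a (b [^] int c2) [^] int n = comm G a b [^] int c'"
      using a b by (simp add: comm_pow_r int_pow_pow nn(1) mult.commute)
    then show "\<exists>a' \<in> carrier G. \<exists>b' \<in> carrier G.
       a [^] int d1 \<otimes> comm G a b [^] int c' = a' [^] int d1 \<otimes> comm G a' b' [^] int n"
      using a b by (intro bexI[of _ a] bexI[of _ "b [^] int c2"]) auto
  next
    fix a b assume a: "a \<in> carrier G" and b: "b \<in> carrier G"
    have "comm G a (b [^] t) [^] int c' = comm G a b [^] (t * int c')"
      using a b by (simp add: comm_pow_r int_pow_pow)
    also have "\<dots> = comm G a b [^] int n"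
    proof (rule pow_mod[OF _ cg[OF a b]])
      show "int g dvd t * int c' - int n"
        using dvd_mult[OF t, of "int n"] by (simp add: algebra_simps nn(1))
    qed (use a b in simp)
    finally have 1: "comm G a (b [^] t) [^] int c' = comm G a b [^] int n" .
    show "\<exists>a' \<in> carrier G. \<exists>b' \<in> carrier G.
       a [^] int d1 \<otimes> comm G a b [^] int n = a' [^] int d1 \<otimes> comm G a' b' [^] int c'"
      using a b 1 by (intro bexI[of _ a] bexI[of _ "b [^] t"]) auto
  qed
  have S6: "word_image G (v_word d1 n) = S (int d1) (int n)"
    unfolding word_image_def S_def by (rule set_eq_pw) (simp add: eval_v)
  have "n dvd c'" using nn(1) by simp
  then have "n \<le> c'" using c'0 by (rule dvd_imp_le)
  moreover have "g \<le> e'" using e'0 by (simp add: g_def dvd_imp_le)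
  ultimately have nle: "n \<le> e'" using c'g by linarith
  have "prime_divs g \<subseteq> prime_divs f" by (rule prime_divs_dvd) (simp add: g_def)
  then have np: "prime_divs n \<subseteq> prime_divs f" using nn(2) by blast
  have "word_image G w = word_image G (v_word d1 n)" using S1 S2 S3 S4 S5 S6 by simp
  then show ?thesis using dd(2) np nle unfolding e_def f_def e'_def by blast
qed

theorem lemma3p6:
  fixes G :: "('a, 'b) monoid_scheme" and w :: word2
  assumes "group G" and "finite (carrier G)" and "nilpotent_class_le_2 G"
  shows
           "\<exists>m n :: nat.
           prime_divs m \<subseteq> prime_divs (grp_exp G) \<and>
           prime_divs n \<subseteq> prime_divs (grp_exp (G Mod (center G))) \<and>
           n \<le> grp_exp (G\<lparr>carrier := derived G (carrier G)\<rparr>) \<and>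
           word_image G w = word_image G (v_word m n)"
proof -
  have "cl2 G" using assms(1,3) by (simp add: cl2_def cl2_axioms_def nilpotent_class_le_2_def)
  then show ?thesis using assms(2) by (rule cl2.main)
qed

end
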